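(* Let $(\mathsf{T}, \mu, \eta, \mathsf{n}, \mathsf{n}_{K})$ be a symmetric comonoidal monad and $(!, \delta, \varepsilon, \Delta, \mathsf{e})$ be a coalgebra modality on the same symmetric monoidal category $(\mathbb{X}, \otimes, K)$, and let $\lambda$ be a coalgebra mixed distributive law of $(\mathsf{T}, \mu, \eta, \mathsf{n}, \mathsf{n}_{K})$ over $(!, \delta, \varepsilon, \Delta, \mathsf{e})$. If $(A, \omega)$ is a $!$-coalgebra, then $\mathsf{T}(\Delta^\omega);\mathsf{n}_{A,A} = \Delta^{\omega^\flat}$ and $\mathsf{T}(\mathsf{e}^\omega);\mathsf{n}_K = \mathsf{e}^{\omega^\flat}$, where $\omega^\flat := \mathsf{T}(\omega);\lambda_A : \mathsf{T}(A)\to !\mathsf{T}(A)$.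
   Context: Composition is in diagrammatic order. A symmetric comonoidal monad $(\mathsf{T},\mu,\eta,\mathsf{n},\mathsf{n}_K)$ is a monad with symmetric oplax monoidal structure $\mathsf{n}_{A,B}:\mathsf{T}(A\otimes B)\to\mathsf{T}(A)\otimes\mathsf{T}(B)$, $\mathsf{n}_K:\mathsf{T}(K)\to K$ compatible with $\mu,\eta$. A coalgebra modality $(!,\delta,\varepsilon,\Delta,\mathsf{e})$ is a comonad $(!,\delta,\varepsilon)$ with natural transformations $\Delta_A:!(A)\to!(A)\otimes!(A)$, $\mathsf{e}_A:!(A)\to K$ making each $(!(A),\Delta_A,\mathsf{e}_A)$ a cocommutative comonoid such that $\delta_A$ is a comonoid morphism. For a $!$-coalgebra $(B,\omega)$ put $\Delta^\omega:=\omega;\Delta_B;(\varepsilon_B\otimes\varepsilon_B)$ and $\mathsf{e}^\omega:=\omega;\mathsf{e}_B$. A mixed distributive law is a natural $\lambda_A:\mathsf{T}!(A)\to!\mathsf{T}(A)$ with $\mu_{!(A)};\lambda_A=\mathsf{T}(\lambda_A);\lambda_{\mathsf{T}(A)};!(\mu_A)$, $\eta_{!(A)};\lambda_A=!(\eta_A)$, $\mathsf{T}(\delta_A);\lambda_{!(A)};!(\lambda_A)=\lambda_A;\delta_{\mathsf{T}(A)}$, $\lambda_A;\varepsilon_{\mathsf{T}(A)}=\mathsf{T}(\varepsilon_A)$; it is a coalgebra mixed distributive law if in addition $\mathsf{T}(\Delta_A);\mathsf{n}_{!(A),!(A)};(\lambda_A\otimes\lambda_A)=\lambda_A;\Delta_{\mathsf{T}(A)}$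 and $\mathsf{T}(\mathsf{e}_A);\mathsf{n}_K=\lambda_A;\mathsf{e}_{\mathsf{T}(A)}$. For such $\lambda$, $(\mathsf{T}(A),\omega^\flat)$ is a $!$-coalgebra. *)

theory Defs
  imports Main
begin

text \<open>Composition seq is written in
diagrammatic order: seq f g : src f -> tgt g when tgt f = src g.\<close>

record ('o, 'm) smcat =
  Arr :: "'m set"
  src :: "'m \<Rightarrow> 'o"
  tgt :: "'m \<Rightarrow> 'o"
  idm :: "'o \<Rightarrow> 'm"
  seq :: "'m \<Rightarrow> 'm \<Rightarrow> 'm"
  tens_o :: "'o \<Rightarrow> 'o \<Rightarrow> 'o"
  tens :: "'m \<Rightarrow> 'm \<Rightarrow> 'm"
  unitK :: "'o"
  assoc :: "'o \<Rightarrow> 'o \<Rightarrow> 'o \<Rightarrow> 'm"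
  lunit :: "'o \<Rightarrow> 'm"
  runit :: "'o \<Rightarrow> 'm"
  sym :: "'o \<Rightarrow> 'o \<Rightarrow> 'm"

definition hom :: "('o,'m) smcat \<Rightarrow> 'm \<Rightarrow> 'o \<Rightarrow> 'o \<Rightarrow> bool" where
  "hom C f a b \<longleftrightarrow> f \<in> Arr C \<and> src C f = a \<and> tgt C f = b"

definition is_category :: "('o,'m) smcat \<Rightarrow> bool" where
  "is_category C \<longleftrightarrow>
    (\<forall>a. hom C (idm C a) a a) \<and>
    (\<forall>f g. f \<in> Arr C \<and> g \<in> Arr C \<and> tgt C f = src C g \<longrightarrow>
        hom C (seq C f g) (src C f) (tgt C g)) \<and>
    (\<forall>f \<in> Arr C. seq C (idm C (src C f)) f = f \<and> seq C f (idm C (tgt C f)) = f) \<and>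
    (\<forall>f g h. f \<in> Arr C \<and> g \<in> Arr C \<and> h \<in> Arr C \<and> tgt C f = src C g \<and> tgt C g = src C h \<longrightarrow>
        seq C (seq C f g) h = seq C f (seq C g h))"

definition iso :: "('o,'m) smcat \<Rightarrow> 'm \<Rightarrow> bool" where
  "iso C f \<longleftrightarrow> f \<in> Arr C \<and>
     (\<exists>g. hom C g (tgt C f) (src C f) \<and> seq C f g = idm C (src C f) \<and> seq C g f = idm C (tgt C f))"

definition is_symmetric_monoidal :: "('o,'m) smcat \<Rightarrow> bool" where
  "is_symmetric_monoidal C \<longleftrightarrow> is_category C \<and>
    \<comment> \<open>tensor is a bifunctor\<close>
    (\<forall>f \<in> Arr C. \<forall>g \<in> Arr C. hom C (tens C f g) (tens_o C (src C f) (src C g)) (tens_o C (tgt C f) (tgt C g))) \<and>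
    (\<forall>a b. tens C (idm C a) (idm C b) = idm C (tens_o C a b)) \<and>
    (\<forall>f f' g g'. f \<in> Arr C \<and> f' \<in> Arr C \<and> g \<in> Arr C \<and> g' \<in> Arr C \<and>
        tgt C f = src C f' \<and> tgt C g = src C g' \<longrightarrow>
        tens C (seq C f f') (seq C g g') = seq C (tens C f g) (tens C f' g')) \<and>
    \<comment> \<open>associator (A*B)*C -> A*(B*C): natural isomorphism\<close>
    (\<forall>a b c. hom C (assoc C a b c) (tens_o C (tens_o C a b) c) (tens_o C a (tens_o C b c)) \<and> iso C (assoc C a b c)) \<and>
    (\<forall>f \<in> Arr C. \<forall>g \<in> Arr C. \<forall>h \<in> Arr C.
        seq C (tens C (tens C f g) h) (assoc C (tgt C f) (tgt C g) (tgt C h)) =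
        seq C (assoc C (src C f) (src C g) (src C h)) (tens C f (tens C g h))) \<and>
    \<comment> \<open>left unitor K*A -> A, right unitor A*K -> A\<close>
    (\<forall>a. hom C (lunit C a) (tens_o C (unitK C) a) a \<and> iso C (lunit C a)) \<and>
    (\<forall>f \<in> Arr C. seq C (tens C (idm C (unitK C)) f) (lunit C (tgt C f)) = seq C (lunit C (src C f)) f) \<and>
    (\<forall>a. hom C (runit C a) (tens_o C a (unitK C)) a \<and> iso C (runit C a)) \<and>
    (\<forall>f \<in> Arr C. seq C (tens C f (idm C (unitK C))) (runit C (tgt C f)) = seq C (runit C (src C f)) f) \<and>
    \<comment> \<open>pentagon and triangle\<close>
    (\<forall>a b c d. seq C (assoc C (tens_o C a b) c d) (assoc C a b (tens_o C c d)) =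
        seq C (seq C (tens C (assoc C a b c) (idm C d)) (assoc C a (tens_o C b c) d))
              (tens C (idm C a) (assoc C b c d))) \<and>
    (\<forall>a b. seq C (assoc C a (unitK C) b) (tens C (idm C a) (lunit C b)) = tens C (runit C a) (idm C b)) \<and>
    \<comment> \<open>symmetry A*B -> B*A: natural, involutive, hexagon\<close>
    (\<forall>a b. hom C (sym C a b) (tens_o C a b) (tens_o C b a)) \<and>
    (\<forall>f \<in> Arr C. \<forall>g \<in> Arr C. seq C (tens C f g) (sym C (tgt C f) (tgt C g)) =
        seq C (sym C (src C f) (src C g)) (tens C g f)) \<and>
    (\<forall>a b. seq C (sym C a b) (sym C b a) = idm C (tens_o C a b)) \<and>
    (\<forall>a b c. seq C (seq C (assoc C a b c) (sym C a (tens_o C b c))) (assoc C b c a) =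
        seq C (seq C (tens C (sym C a b) (idm C c)) (assoc C b a c)) (tens C (idm C b) (sym C a c)))"

record ('o, 'm) endofun =
  fo :: "'o \<Rightarrow> 'o"
  fm :: "'m \<Rightarrow> 'm"

definition is_endofunctor :: "('o,'m) smcat \<Rightarrow> ('o,'m) endofun \<Rightarrow> bool" where
  "is_endofunctor C F \<longleftrightarrow>
    (\<forall>f \<in> Arr C. hom C (fm F f) (fo F (src C f)) (fo F (tgt C f))) \<and>
    (\<forall>a. fm F (idm C a) = idm C (fo F a)) \<and>
    (\<forall>f g. f \<in> Arr C \<and> g \<in> Arr C \<and> tgt C f = src C g \<longrightarrow> fm F (seq C f g) = seq C (fm F f) (fm F g))"

definition Fid :: "('o,'m) endofun" where
  "Fid = \<lparr>fo = (\<lambda>a. a), fm = (\<lambda>f. f)\<rparr>"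

text \<open>fcomp F G: first apply F, then G (i.e. the functor G o F).\<close>
definition fcomp :: "('o,'m) endofun \<Rightarrow> ('o,'m) endofun \<Rightarrow> ('o,'m) endofun" where
  "fcomp F G = \<lparr>fo = (\<lambda>a. fo G (fo F a)), fm = (\<lambda>f. fm G (fm F f))\<rparr>"

definition nat_trans :: "('o,'m) smcat \<Rightarrow> ('o,'m) endofun \<Rightarrow> ('o,'m) endofun \<Rightarrow> ('o \<Rightarrow> 'm) \<Rightarrow> bool" where
  "nat_trans C F G t \<longleftrightarrow>
    (\<forall>a. hom C (t a) (fo F a) (fo G a)) \<and>
    (\<forall>f \<in> Arr C. seq C (fm F f) (t (tgt C f)) = seq C (t (src C f)) (fm G f))"

definition is_monad :: "('o,'m) smcat \<Rightarrow> ('o,'m) endofun \<Rightarrow> ('o \<Rightarrow> 'm) \<Rightarrow> ('o \<Rightarrow> 'm) \<Rightarrow> bool" where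
  "is_monad C T mu eta \<longleftrightarrow> is_endofunctor C T \<and>
    nat_trans C (fcomp T T) T mu \<and> nat_trans C Fid T eta \<and>
    (\<forall>a. seq C (mu (fo T a)) (mu a) = seq C (fm T (mu a)) (mu a)) \<and>
    (\<forall>a. seq C (eta (fo T a)) (mu a) = idm C (fo T a)) \<and>
    (\<forall>a. seq C (fm T (eta a)) (mu a) = idm C (fo T a))"

definition is_comonad :: "('o,'m) smcat \<Rightarrow> ('o,'m) endofun \<Rightarrow> ('o \<Rightarrow> 'm) \<Rightarrow> ('o \<Rightarrow> 'm) \<Rightarrow> bool" where
  "is_comonad C B delta eps \<longleftrightarrow> is_endofunctor C B \<and>
    nat_trans C B (fcomp B B) delta \<and> nat_trans C B Fid eps \<and>
    (\<forall>a. seq C (delta a) (delta (fo B a)) = seq C (delta a) (fm B (delta a))) \<and>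
    (\<forall>a. seq C (delta a) (eps (fo B a)) = idm C (fo B a)) \<and>
    (\<forall>a. seq C (delta a) (fm B (eps a)) = idm C (fo B a))"

definition is_sym_comonoidal_monad ::
  "('o,'m) smcat \<Rightarrow> ('o,'m) endofun \<Rightarrow> ('o \<Rightarrow> 'm) \<Rightarrow> ('o \<Rightarrow> 'm) \<Rightarrow> ('o \<Rightarrow> 'o \<Rightarrow> 'm) \<Rightarrow> 'm \<Rightarrow> bool" where
  "is_sym_comonoidal_monad C T mu eta n nK \<longleftrightarrow> is_monad C T mu eta \<and>
    (\<forall>a b. hom C (n a b) (fo T (tens_o C a b)) (tens_o C (fo T a) (fo T b))) \<and>
    (\<forall>f \<in> Arr C. \<forall>g \<in> Arr C. seq C (fm T (tens C f g)) (n (tgt C f) (tgt C g)) =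
        seq C (n (src C f) (src C g)) (tens C (fm T f) (fm T g))) \<and>
    hom C nK (fo T (unitK C)) (unitK C) \<and>
    \<comment> \<open>coassociativity\<close>
    (\<forall>a b c. seq C (seq C (fm T (assoc C a b c)) (n a (tens_o C b c))) (tens C (idm C (fo T a)) (n b c)) =
        seq C (seq C (n (tens_o C a b) c) (tens C (n a b) (idm C (fo T c)))) (assoc C (fo T a) (fo T b) (fo T c))) \<and>
    \<comment> \<open>counitality\<close>
    (\<forall>a. seq C (seq C (n (unitK C) a) (tens C nK (idm C (fo T a)))) (lunit C (fo T a)) = fm T (lunit C a)) \<and>
    (\<forall>a. seq C (seq C (n a (unitK C)) (tens C (idm C (fo T a)) nK)) (runit C (fo T a)) = fm T (runit C a)) \<and>
    \<comment> \<open>symmetry\<close>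
    (\<forall>a b. seq C (n a b) (sym C (fo T a) (fo T b)) = seq C (fm T (sym C a b)) (n b a)) \<and>
    \<comment> \<open>mu and eta are comonoidal\<close>
    (\<forall>a b. seq C (mu (tens_o C a b)) (n a b) =
        seq C (seq C (fm T (n a b)) (n (fo T a) (fo T b))) (tens C (mu a) (mu b))) \<and>
    seq C (mu (unitK C)) nK = seq C (fm T nK) nK \<and>
    (\<forall>a b. seq C (eta (tens_o C a b)) (n a b) = tens C (eta a) (eta b)) \<and>
    seq C (eta (unitK C)) nK = idm C (unitK C)"

definition is_coalgebra_modality ::
  "('o,'m) smcat \<Rightarrow> ('o,'m) endofun \<Rightarrow> ('o \<Rightarrow> 'm) \<Rightarrow> ('o \<Rightarrow> 'm) \<Rightarrow> ('o \<Rightarrow> 'm) \<Rightarrow> ('o \<Rightarrow> 'm) \<Rightarrow> bool" where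
  "is_coalgebra_modality C B delta eps Dl e \<longleftrightarrow> is_comonad C B delta eps \<and>
    \<comment> \<open>Dl and e are natural\<close>
    (\<forall>a. hom C (Dl a) (fo B a) (tens_o C (fo B a) (fo B a))) \<and>
    (\<forall>f \<in> Arr C. seq C (fm B f) (Dl (tgt C f)) = seq C (Dl (src C f)) (tens C (fm B f) (fm B f))) \<and>
    (\<forall>a. hom C (e a) (fo B a) (unitK C)) \<and>
    (\<forall>f \<in> Arr C. seq C (fm B f) (e (tgt C f)) = e (src C f)) \<and>
    \<comment> \<open>each (B a, Dl a, e a) is a cocommutative comonoid\<close>
    (\<forall>a. seq C (seq C (Dl a) (tens C (Dl a) (idm C (fo B a)))) (assoc C (fo B a) (fo B a) (fo B a)) =
         seq C (Dl a) (tens C (idm C (fo B a)) (Dl a))) \<and>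
    (\<forall>a. seq C (seq C (Dl a) (tens C (e a) (idm C (fo B a)))) (lunit C (fo B a)) = idm C (fo B a)) \<and>
    (\<forall>a. seq C (seq C (Dl a) (tens C (idm C (fo B a)) (e a))) (runit C (fo B a)) = idm C (fo B a)) \<and>
    (\<forall>a. seq C (Dl a) (sym C (fo B a) (fo B a)) = Dl a) \<and>
    \<comment> \<open>delta is a comonoid morphism\<close>
    (\<forall>a. seq C (delta a) (Dl (fo B a)) = seq C (Dl a) (tens C (delta a) (delta a))) \<and>
    (\<forall>a. seq C (delta a) (e (fo B a)) = e a)"

definition is_mixed_distributive_law ::
  "('o,'m) smcat \<Rightarrow> ('o,'m) endofun \<Rightarrow> ('o \<Rightarrow> 'm) \<Rightarrow> ('o \<Rightarrow> 'm) \<Rightarrow>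
   ('o,'m) endofun \<Rightarrow> ('o \<Rightarrow> 'm) \<Rightarrow> ('o \<Rightarrow> 'm) \<Rightarrow> ('o \<Rightarrow> 'm) \<Rightarrow> bool" where
  "is_mixed_distributive_law C T mu eta B delta eps lam \<longleftrightarrow>
    nat_trans C (fcomp B T) (fcomp T B) lam \<and>
    (\<forall>a. seq C (mu (fo B a)) (lam a) = seq C (seq C (fm T (lam a)) (lam (fo T a))) (fm B (mu a))) \<and>
    (\<forall>a. seq C (eta (fo B a)) (lam a) = fm B (eta a)) \<and>
    (\<forall>a. seq C (seq C (fm T (delta a)) (lam (fo B a))) (fm B (lam a)) = seq C (lam a) (delta (fo T a))) \<and>
    (\<forall>a. seq C (lam a) (eps (fo T a)) = fm T (eps a))"

definition is_coalgebra_mixed_distributive_law ::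
  "('o,'m) smcat \<Rightarrow> ('o,'m) endofun \<Rightarrow> ('o \<Rightarrow> 'm) \<Rightarrow> ('o \<Rightarrow> 'm) \<Rightarrow> ('o \<Rightarrow> 'o \<Rightarrow> 'm) \<Rightarrow> 'm \<Rightarrow>
   ('o,'m) endofun \<Rightarrow> ('o \<Rightarrow> 'm) \<Rightarrow> ('o \<Rightarrow> 'm) \<Rightarrow> ('o \<Rightarrow> 'm) \<Rightarrow> ('o \<Rightarrow> 'm) \<Rightarrow> ('o \<Rightarrow> 'm) \<Rightarrow> bool" where
  "is_coalgebra_mixed_distributive_law C T mu eta n nK B delta eps Dl e lam \<longleftrightarrow>
    is_mixed_distributive_law C T mu eta B delta eps lam \<and>
    (\<forall>a. seq C (seq C (fm T (Dl a)) (n (fo B a) (fo B a))) (tens C (lam a) (lam a)) =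
         seq C (lam a) (Dl (fo T a))) \<and>
    (\<forall>a. seq C (fm T (e a)) nK = seq C (lam a) (e (fo T a)))"

definition is_coalgebra ::
  "('o,'m) smcat \<Rightarrow> ('o,'m) endofun \<Rightarrow> ('o \<Rightarrow> 'm) \<Rightarrow> ('o \<Rightarrow> 'm) \<Rightarrow> 'o \<Rightarrow> 'm \<Rightarrow> bool" where
  "is_coalgebra C B delta eps A w \<longleftrightarrow> hom C w A (fo B A) \<and>
    seq C w (delta A) = seq C w (fm B w) \<and> seq C w (eps A) = idm C A"

definition coDelta ::
  "('o,'m) smcat \<Rightarrow> ('o \<Rightarrow> 'm) \<Rightarrow> ('o \<Rightarrow> 'm) \<Rightarrow> 'o \<Rightarrow> 'm \<Rightarrow> 'm" where
  "coDelta C Dl eps A w = seq C (seq C w (Dl A)) (tens C (eps A) (eps A))"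

definition coE :: "('o,'m) smcat \<Rightarrow> ('o \<Rightarrow> 'm) \<Rightarrow> 'o \<Rightarrow> 'm \<Rightarrow> 'm" where
  "coE C e A w = seq C w (e A)"

definition flat :: "('o,'m) smcat \<Rightarrow> ('o,'m) endofun \<Rightarrow> ('o \<Rightarrow> 'm) \<Rightarrow> 'o \<Rightarrow> 'm \<Rightarrow> 'm" where
  "flat C T lam A w = seq C (fm T w) (lam A)"

end

theory Submission
  imports Defs
begin

theorem lemma6p3:
  fixes C :: "('o,'m) smcat" and T B :: "('o,'m) endofun"
  assumes "is_symmetric_monoidal C"
    and "is_sym_comonoidal_monad C T mu eta n nK"
    and "is_coalgebra_modality C B delta eps Dl e"
    and "is_coalgebra_mixed_distributive_law C T mu eta n nK B delta eps Dl e lam"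
    and "is_coalgebra C B delta eps A w"
  shows "seq C (fm T (coDelta C Dl eps A w)) (n A A) = coDelta C Dl eps (fo T A) (flat C T lam A w) \<and>
         seq C (fm T (coE C e A w)) nK = coE C e (fo T A) (flat C T lam A w)"
proof -
  note A = assms
  have cat: "is_category C" using A(1) by (simp add: is_symmetric_monoidal_def)
  have comp: "\<And>f g a b c. hom C f a b \<Longrightarrow> hom C g b c \<Longrightarrow> hom C (seq C f g) a c"
    using cat unfolding is_category_def hom_def by metis
  have ass: "\<And>f g h a b c d. hom C f a b \<Longrightarrow> hom C g b c \<Longrightarrow> hom C h c d \<Longrightarrow>
      seq C (seq C f g) h = seq C f (seq C g h)"
    using cat unfolding is_category_def hom_def by metis
  have tens_h: "\<And>f g a b c d. hom C f a b \<Longrightarrow> hom C g c d \<Longrightarrow> hom C (tens C f g) (tens_o C a c) (tens_o C b d)"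
    using A(1) unfolding is_symmetric_monoidal_def hom_def by metis
  have tens_c: "\<And>f f' g g' a b c a' b' c'. hom C f a b \<Longrightarrow> hom C f' b c \<Longrightarrow> hom C g a' b' \<Longrightarrow> hom C g' b' c' \<Longrightarrow>
      tens C (seq C f f') (seq C g g') = seq C (tens C f g) (tens C f' g')"
    using A(1) unfolding is_symmetric_monoidal_def hom_def by metis
  have mon: "is_monad C T mu eta" using A(2) by (simp add: is_sym_comonoidal_monad_def)
  have Tf: "is_endofunctor C T" using mon by (simp add: is_monad_def)
  have Th: "\<And>f a b. hom C f a b \<Longrightarrow> hom C (fm T f) (fo T a) (fo T b)"
    using Tf unfolding is_endofunctor_def hom_def by metis
  have Tc: "\<And>f g a b c. hom C f a b \<Longrightarrow> hom C g b c \<Longrightarrow> fm T (seq C f g) = seq C (fm T f) (fm T g)"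
    using Tf unfolding is_endofunctor_def hom_def by metis
  have nh: "\<And>a b. hom C (n a b) (fo T (tens_o C a b)) (tens_o C (fo T a) (fo T b))"
    using A(2) by (simp add: is_sym_comonoidal_monad_def)
  have nnat: "\<And>f g a b c d. hom C f a b \<Longrightarrow> hom C g c d \<Longrightarrow>
     seq C (fm T (tens C f g)) (n b d) = seq C (n a c) (tens C (fm T f) (fm T g))"
    using A(2) unfolding is_sym_comonoidal_monad_def hom_def by metis
  have nKh: "hom C nK (fo T (unitK C)) (unitK C)"
    using A(2) by (simp add: is_sym_comonoidal_monad_def)
  have cm: "is_comonad C B delta eps" using A(3) by (simp add: is_coalgebra_modality_def)
  have epsh: "\<And>a. hom C (eps a) (fo B a) a"
    using cm unfolding is_comonad_def nat_trans_def Fid_def by simp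
  have Dlh: "\<And>a. hom C (Dl a) (fo B a) (tens_o C (fo B a) (fo B a))"
    using A(3) by (simp add: is_coalgebra_modality_def)
  have eh: "\<And>a. hom C (e a) (fo B a) (unitK C)"
    using A(3) by (simp add: is_coalgebra_modality_def)
  have md: "is_mixed_distributive_law C T mu eta B delta eps lam"
    using A(4) by (simp add: is_coalgebra_mixed_distributive_law_def)
  have lamh: "\<And>a. hom C (lam a) (fo T (fo B a)) (fo B (fo T a))"
    using md unfolding is_mixed_distributive_law_def nat_trans_def fcomp_def by simp
  have leps: "\<And>a. seq C (lam a) (eps (fo T a)) = fm T (eps a)"
    using md unfolding is_mixed_distributive_law_def by simp
  have lDl: "\<And>a. seq C (seq C (fm T (Dl a)) (n (fo B a) (fo B a))) (tens C (lam a) (lam a)) =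
         seq C (lam a) (Dl (fo T a))"
    using A(4) unfolding is_coalgebra_mixed_distributive_law_def by simp
  have le: "\<And>a. seq C (fm T (e a)) nK = seq C (lam a) (e (fo T a))"
    using A(4) unfolding is_coalgebra_mixed_distributive_law_def by simp
  have wh: "hom C w A (fo B A)" using A(5) by (simp add: is_coalgebra_def)
  let ?TA = "fo T A" and ?BA = "fo B A"
  note Tw = Th[OF wh]
  note TDl = Th[OF Dlh[of A]]
  note Tee = Th[OF tens_h[OF epsh[of A] epsh[of A]]]
  have "seq C (fm T (coDelta C Dl eps A w)) (n A A)
      = seq C (seq C (seq C (fm T w) (fm T (Dl A))) (fm T (tens C (eps A) (eps A)))) (n A A)"
    unfolding coDelta_def
    using Tc[OF comp[OF wh Dlh[of A]] tens_h[OF epsh[of A] epsh[of A]]] Tc[OF wh Dlh[of A]] by simp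
  also have "\<dots> = seq C (seq C (fm T w) (fm T (Dl A))) (seq C (fm T (tens C (eps A) (eps A))) (n A A))"
    by (rule ass[OF comp[OF Tw TDl] Tee nh])
  also have "\<dots> = seq C (seq C (fm T w) (fm T (Dl A))) (seq C (n ?BA ?BA)
        (tens C (seq C (lam A) (eps ?TA)) (seq C (lam A) (eps ?TA))))"
    using nnat[OF epsh[of A] epsh[of A]] leps by simp
  also have "\<dots> = seq C (seq C (fm T w) (fm T (Dl A))) (seq C (n ?BA ?BA)
        (seq C (tens C (lam A) (lam A)) (tens C (eps ?TA) (eps ?TA))))"
    using tens_c[OF lamh epsh lamh epsh] by simp
  also have "\<dots> = seq C (fm T w) (seq C (seq C (seq C (fm T (Dl A)) (n ?BA ?BA)) (tens C (lam A) (lam A)))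
        (tens C (eps ?TA) (eps ?TA)))"
  proof -
    have h1: "hom C (seq C (fm T (Dl A)) (n ?BA ?BA)) (fo T ?BA) (tens_o C (fo T ?BA) (fo T ?BA))"
      by (rule comp[OF TDl nh])
    have h2: "hom C (tens C (lam A) (lam A)) (tens_o C (fo T ?BA) (fo T ?BA)) (tens_o C (fo B ?TA) (fo B ?TA))"
      by (rule tens_h[OF lamh lamh])
    have h3: "hom C (tens C (eps ?TA) (eps ?TA)) (tens_o C (fo B ?TA) (fo B ?TA)) (tens_o C ?TA ?TA)"
      by (rule tens_h[OF epsh epsh])
    show ?thesis
      using ass[OF Tw TDl comp[OF nh comp[OF h2 h3]]] ass[OF TDl nh comp[OF h2 h3]]
        ass[OF h1 h2 h3] ass[OF TDl nh h2] by simp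
  qed
  also have "\<dots> = seq C (fm T w) (seq C (seq C (lam A) (Dl ?TA)) (tens C (eps ?TA) (eps ?TA)))"
    using lDl by simp
  also have "\<dots> = coDelta C Dl eps (fo T A) (flat C T lam A w)"
    unfolding coDelta_def flat_def
    using ass[OF Tw lamh Dlh] ass[OF Tw comp[OF lamh Dlh] tens_h[OF epsh epsh]] by simp
  finally have 1: "seq C (fm T (coDelta C Dl eps A w)) (n A A) = coDelta C Dl eps (fo T A) (flat C T lam A w)" .
  have "seq C (fm T (coE C e A w)) nK = seq C (seq C (fm T w) (fm T (e A))) nK"
    unfolding coE_def using Tc[OF wh eh] by simp
  also have "\<dots> = seq C (fm T w) (seq C (lam A) (e ?TA))"
    using ass[OF Tw Th[OF eh] nKh] le by simp
  also have "\<dots> = coE C e (fo T A) (flat C T lam A w)"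
    unfolding coE_def flat_def using ass[OF Tw lamh eh] by simp
  finally show ?thesis using 1 by simp
qed

end
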